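(* Let $\phi\in\Phi$, let $f:\mathbb{R}^n\to(-\infty,+\infty]$ be proper lsc, $\Omega\subseteq\mathbb{R}^n$ closed, $\delta\ge0$, $p\in[1,\infty]$, and $\mathcal{J}=\{J_1,\dots,J_m\}$ a partition of $\{1,\dots,n\}$. Suppose the problem $$\textstyle (P)\quad \min_{x\in\mathbb{R}^n}\{\|G_{\mathcal{J},p}(x)\|_0:\ f(x)\le\delta,\ x\in\Omega\}$$ has a nonempty global optimal solution set and optimal value $s^*$. Consider $$\textstyle (Q)\quad \min_{x\in\mathbb{R}^n,w\in\mathbb{R}^m}\{\sum_{i=1}^m\phi(w_i):\ \langle e-w,G_{\mathcal{J},p}(x)\rangle=0,\ 0\le w\le e,\ x\in\Omega,\ f(x)\le\delta\}.$$ If $x^*$ is a global optimal solution of $(P)$, then $(x^*,\max(\mathrm{sgn}(G_{\mathcal{J},p}(x^* )),t^*e))$ (max taken componentwise) is a global optimal solution of $(Q)$ and the optimal value of $(Q)$ equals $s^*$; conversely, if $(x^*,w^* )$ is a global optimal solution of $(Q)$, then $x^*$ is a global optimal solution of $(P)$.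
   Context: $\Phi$ is the family of proper lsc functions $\phi:\mathbb{R}\to(-\infty,+\infty]$ with $\mathrm{int}(\mathrm{dom}\,\phi)\supseteq[0,1]$, convex on $[0,1]$, such that $\min_{t\in[0,1]}\phi(t)=0$ is attained at a (fixed) point $t^*\in[0,1)$, and $\phi(1)=1$. $G_{\mathcal{J},p}(x):=(\|x_{J_1}\|_p,\dots,\|x_{J_m}\|_p)^T$, where $x_{J_i}$ is the subvector of $x$ indexed by $J_i$; $\|v\|_0$ is the number of nonzero entries of $v$; $e$ is the all-ones vector; $\mathrm{sgn}$ is applied componentwise. *)

theory Defs
  imports "HOL-Analysis.Analysis" "HOL-Library.Extended_Real"
begin

definition lsc :: "('a::topological_space \<Rightarrow> ereal) \<Rightarrow> bool" where
  "lsc f \<longleftrightarrow> (\<forall>a::ereal. closed {x. f x \<le> a})"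

definition proper_fun :: "('a \<Rightarrow> ereal) \<Rightarrow> bool" where
  "proper_fun f \<longleftrightarrow> (\<forall>x. f x \<noteq> -\<infinity>) \<and> (\<exists>x. f x \<noteq> \<infinity>)"

definition in_Phi :: "(real \<Rightarrow> ereal) \<Rightarrow> real \<Rightarrow> bool" where
  "in_Phi \<phi> tstar \<longleftrightarrow>
     proper_fun \<phi> \<and> lsc \<phi> \<and>
     {0..1} \<subseteq> interior {t. \<phi> t \<noteq> \<infinity>} \<and>
     convex_on {0..1} (\<lambda>t. real_of_ereal (\<phi> t)) \<and>
     tstar \<in> {0..<1} \<and> \<phi> tstar = 0 \<and> (\<forall>t\<in>{0..1}. \<phi> tstar \<le> \<phi> t) \<and>
     \<phi> 1 = 1"

definition block_pnorm :: "ereal \<Rightarrow> (real^'n::finite) \<Rightarrow> 'n set \<Rightarrow> real" where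
  "block_pnorm p x J =
     (if p = \<infinity> then (if J = {} then 0 else Max ((\<lambda>j. \<bar>x$j\<bar>) ` J))
      else (\<Sum>j\<in>J. \<bar>x$j\<bar> powr real_of_ereal p) powr (1 / real_of_ereal p))"

definition G_map :: "('m::finite \<Rightarrow> 'n::finite set) \<Rightarrow> ereal \<Rightarrow> real^'n \<Rightarrow> real^'m" where
  "G_map J p x = (\<chi> i. block_pnorm p x (J i))"

definition l0norm :: "(real^'m::finite) \<Rightarrow> nat" where
  "l0norm v = card {i. v$i \<noteq> 0}"

definition feasP :: "(real^'n::finite \<Rightarrow> ereal) \<Rightarrow> real \<Rightarrow> (real^'n) set \<Rightarrow> real^'n \<Rightarrow> bool" where
  "feasP f \<delta> \<Omega> x \<longleftrightarrow> f x \<le> ereal \<delta> \<and> x \<in> \<Omega>"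

definition optP :: "('m::finite \<Rightarrow> 'n::finite set) \<Rightarrow> ereal \<Rightarrow> (real^'n::finite \<Rightarrow> ereal) \<Rightarrow> real \<Rightarrow> (real^'n) set \<Rightarrow> real^'n \<Rightarrow> bool" where
  "optP J p f \<delta> \<Omega> x \<longleftrightarrow> feasP f \<delta> \<Omega> x \<and>
     (\<forall>y. feasP f \<delta> \<Omega> y \<longrightarrow> l0norm (G_map J p x) \<le> l0norm (G_map J p y))"

definition valP :: "('m::finite \<Rightarrow> 'n::finite set) \<Rightarrow> ereal \<Rightarrow> (real^'n \<Rightarrow> ereal) \<Rightarrow> real \<Rightarrow> (real^'n) set \<Rightarrow> nat" where
  "valP J p f \<delta> \<Omega> = Inf {l0norm (G_map J p x) | x. feasP f \<delta> \<Omega> x}"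

definition feasQ :: "('m::finite \<Rightarrow> 'n::finite set) \<Rightarrow> ereal \<Rightarrow> (real^'n \<Rightarrow> ereal) \<Rightarrow> real \<Rightarrow> (real^'n) set
     \<Rightarrow> real^'n \<Rightarrow> real^'m \<Rightarrow> bool" where
  "feasQ J p f \<delta> \<Omega> x w \<longleftrightarrow>
     (1 - w) \<bullet> G_map J p x = 0 \<and> (\<forall>i. 0 \<le> w$i \<and> w$i \<le> 1) \<and> x \<in> \<Omega> \<and> f x \<le> ereal \<delta>"

definition objQ :: "(real \<Rightarrow> ereal) \<Rightarrow> (real^'m::finite) \<Rightarrow> ereal" where
  "objQ \<phi> w = (\<Sum>i\<in>UNIV. \<phi> (w$i))"

definition optQ :: "(real \<Rightarrow> ereal) \<Rightarrow> ('m::finite \<Rightarrow> 'n::finite set) \<Rightarrow> ereal \<Rightarrow> (real^'n \<Rightarrow> ereal) \<Rightarrow> real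
     \<Rightarrow> (real^'n) set \<Rightarrow> real^'n \<Rightarrow> real^'m \<Rightarrow> bool" where
  "optQ \<phi> J p f \<delta> \<Omega> x w \<longleftrightarrow> feasQ J p f \<delta> \<Omega> x w \<and>
     (\<forall>y v. feasQ J p f \<delta> \<Omega> y v \<longrightarrow> objQ \<phi> w \<le> objQ \<phi> v)"

definition valQ :: "(real \<Rightarrow> ereal) \<Rightarrow> ('m::finite \<Rightarrow> 'n::finite set) \<Rightarrow> ereal \<Rightarrow> (real^'n \<Rightarrow> ereal) \<Rightarrow> real
     \<Rightarrow> (real^'n) set \<Rightarrow> ereal" where
  "valQ \<phi> J p f \<delta> \<Omega> = (INF xw \<in> {(x, w). feasQ J p f \<delta> \<Omega> x w}. objQ \<phi> (snd xw))"

end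

theory Submission
  imports Defs
begin

lemma block_pnorm_nonneg: "block_pnorm p x J \<ge> 0"
proof (cases "p = \<infinity>")
  case True
  show ?thesis
  proof (cases "J = {}")
    case False
    then obtain j where "j \<in> J" by blast
    then have "\<bar>x$j\<bar> \<le> Max ((\<lambda>j. \<bar>x$j\<bar>) ` J)"
      by (intro Max_ge) auto
    then show ?thesis using True False unfolding block_pnorm_def by auto
  qed (simp add: block_pnorm_def True)
qed (simp add: block_pnorm_def)

lemma G_nonneg: "G_map J p x $ i \<ge> 0"
  by (simp add: G_map_def block_pnorm_nonneg)

lemma feasQ_w1:
  assumes "feasQ J p f \<delta> \<Omega> x w" "G_map J p x $ i \<noteq> 0"
  shows "w $ i = 1"
proof -
  let ?g = "G_map J p x"
  have h: "(\<Sum>k\<in>UNIV. (1 - w$k) * ?g$k) = 0"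
    using assms(1) unfolding feasQ_def inner_vec_def by simp
  have nn: "\<forall>k\<in>UNIV. 0 \<le> (1 - w$k) * ?g$k"
    using assms(1) G_nonneg[of J p x] unfolding feasQ_def by (simp)
  have "(1 - w$i) * ?g$i = 0"
    using sum_nonneg_eq_0_iff[of UNIV "\<lambda>k. (1 - w$k) * ?g$k"] h nn by auto
  then show ?thesis using assms(2) by simp
qed

lemma objQ_lower:
  assumes phi: "in_Phi \<phi> tstar" and F: "feasQ J p f \<delta> \<Omega> x w"
  shows "ereal (real (l0norm (G_map J p x))) \<le> objQ \<phi> w"
proof -
  let ?S = "{i. G_map J p x $ i \<noteq> 0}"
  have nn: "\<And>t. t \<in> {0..1} \<Longrightarrow> 0 \<le> \<phi> t" using phi unfolding in_Phi_def by auto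
  have w01: "\<And>i. w$i \<in> {0..1}" using F unfolding feasQ_def by auto
  have "(\<Sum>i\<in>?S. \<phi> (w$i)) \<le> (\<Sum>i\<in>UNIV. \<phi> (w$i))"
    by (rule sum_mono2) (auto intro: nn w01)
  moreover have "(\<Sum>i\<in>?S. \<phi> (w$i)) = (\<Sum>i\<in>?S. 1)"
    using feasQ_w1[OF F] phi unfolding in_Phi_def by (intro sum.cong) auto
  moreover have "(\<Sum>i\<in>?S. (1::ereal)) = ereal (real (card ?S))"
    by (simp add: sum_constant_ereal)
  ultimately show ?thesis unfolding objQ_def l0norm_def by simp
qed

lemma witness:
  assumes phi: "in_Phi \<phi> tstar" and F: "feasP f \<delta> \<Omega> x"
  shows "feasQ J p f \<delta> \<Omega> x (\<chi> i. max (sgn (G_map J p x $ i)) tstar)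
     \<and> objQ \<phi> (\<chi> i. max (sgn (G_map J p x $ i)) tstar) = ereal (real (l0norm (G_map J p x)))"
proof -
  let ?g = "G_map J p x"
  let ?w = "\<chi> i. max (sgn (?g $ i)) tstar"
  have t: "0 \<le> tstar" "tstar < 1" "\<phi> tstar = 0" "\<phi> 1 = 1" using phi unfolding in_Phi_def by auto
  have wv: "\<And>i. ?w$i = (if ?g$i = 0 then tstar else 1)"
    using G_nonneg[of J p x] t by (auto simp: sgn_if less_le)
  have wv': "\<And>i. max (sgn (?g $ i)) tstar = (if ?g$i = 0 then tstar else 1)"
    using wv by simp
  have "(\<Sum>k\<in>UNIV. (1 - ?w$k) * ?g$k) = 0"
    by (intro sum.neutral) (auto simp: wv')
  then have f1: "feasQ J p f \<delta> \<Omega> x ?w"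
    using F t unfolding feasQ_def feasP_def inner_vec_def by (auto simp: wv wv')
  have "objQ \<phi> ?w = (\<Sum>i\<in>UNIV. if ?g$i = 0 then 0 else 1)"
    unfolding objQ_def by (intro sum.cong) (auto simp: wv' t)
  also have "\<dots> = (\<Sum>i\<in>{i. ?g$i \<noteq> 0}. (1::ereal))"
    by (subst sum.If_cases) (auto simp: Compl_eq_Diff_UNIV[symmetric] Collect_neg_eq[symmetric])
  also have "\<dots> = ereal (real (l0norm ?g))" by (simp add: l0norm_def sum_constant_ereal)
  finally show ?thesis using f1 by simp
qed

theorem lemma3p1:
  fixes \<phi> :: "real \<Rightarrow> ereal" and tstar :: real
    and f :: "real^'n \<Rightarrow> ereal" and \<Omega> :: "(real^'n) set" and \<delta> :: real and p :: ereal
    and J :: "'m::finite \<Rightarrow> 'n::finite set" and sstar :: nat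
  assumes phi: "in_Phi \<phi> tstar"
    and f_proper: "proper_fun f" and f_lsc: "lsc f"
    and \<Omega>_closed: "closed \<Omega>"
    and \<delta>_nonneg: "\<delta> \<ge> 0"
    and p_ge: "1 \<le> p"
    and J_part: "disjoint_family J" "(\<Union>i. J i) = UNIV" "\<forall>i. J i \<noteq> {}"
    and P_solvable: "\<exists>x. optP J p f \<delta> \<Omega> x"
    and sstar_def: "sstar = valP J p f \<delta> \<Omega>"
  shows "(\<forall>xs. optP J p f \<delta> \<Omega> xs \<longrightarrow>
            optQ \<phi> J p f \<delta> \<Omega> xs (\<chi> i. max (sgn (G_map J p xs $ i)) tstar) \<and>
            valQ \<phi> J p f \<delta> \<Omega> = ereal (real sstar))
       \<and> (\<forall>xs ws. optQ \<phi> J p f \<delta> \<Omega> xs ws \<longrightarrow> optP J p f \<delta> \<Omega> xs)"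
proof -
  have key: "sstar = l0norm (G_map J p xs)" if O: "optP J p f \<delta> \<Omega> xs" for xs
    unfolding sstar_def valP_def
    by (rule cInf_eq_minimum) (use O in \<open>auto simp: optP_def\<close>)
  have A: "optQ \<phi> J p f \<delta> \<Omega> xs (\<chi> i. max (sgn (G_map J p xs $ i)) tstar) \<and>
            valQ \<phi> J p f \<delta> \<Omega> = ereal (real sstar)" if O: "optP J p f \<delta> \<Omega> xs" for xs
  proof -
    have Fx: "feasP f \<delta> \<Omega> xs" using O unfolding optP_def by auto
    note W = witness[OF phi Fx, of J p]
    have lb: "ereal (real sstar) \<le> objQ \<phi> v" if "feasQ J p f \<delta> \<Omega> y v" for y v
    proof -
      have "feasP f \<delta> \<Omega> y" using that unfolding feasQ_def feasP_def by auto
      then have "sstar \<le> l0norm (G_map J p y)" using O key[OF O] unfolding optP_def by auto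
      then have "ereal (real sstar) \<le> ereal (real (l0norm (G_map J p y)))" by simp
      also have "\<dots> \<le> objQ \<phi> v" by (rule objQ_lower[OF phi that])
      finally show ?thesis .
    qed
    have o: "optQ \<phi> J p f \<delta> \<Omega> xs (\<chi> i. max (sgn (G_map J p xs $ i)) tstar)"
      unfolding optQ_def using W lb key[OF O] by auto
    have "valQ \<phi> J p f \<delta> \<Omega> = ereal (real sstar)"
      unfolding valQ_def
    proof (rule antisym)
      show "(INF xw\<in>{(x, w). feasQ J p f \<delta> \<Omega> x w}. objQ \<phi> (snd xw)) \<le> ereal (real sstar)"
        by (rule INF_lower2[of "(xs, \<chi> i. max (sgn (G_map J p xs $ i)) tstar)"])
           (use W key[OF O] in auto)
      show "ereal (real sstar) \<le> (INF xw\<in>{(x, w). feasQ J p f \<delta> \<Omega> x w}. objQ \<phi> (snd xw))"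
        by (rule INF_greatest) (auto intro: lb)
    qed
    with o show ?thesis by simp
  qed
  have B: "optP J p f \<delta> \<Omega> xs" if O: "optQ \<phi> J p f \<delta> \<Omega> xs ws" for xs ws
  proof -
    have F: "feasQ J p f \<delta> \<Omega> xs ws" using O unfolding optQ_def by auto
    have Fx: "feasP f \<delta> \<Omega> xs" using F unfolding feasQ_def feasP_def by auto
    have "l0norm (G_map J p xs) \<le> l0norm (G_map J p y)" if Fy: "feasP f \<delta> \<Omega> y" for y
    proof -
      note W = witness[OF phi Fy, of J p]
      have "ereal (real (l0norm (G_map J p xs))) \<le> objQ \<phi> ws" by (rule objQ_lower[OF phi F])
      also have "\<dots> \<le> ereal (real (l0norm (G_map J p y)))"
        using O W unfolding optQ_def by metis
      finally show ?thesis by simp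
    qed
    with Fx show ?thesis unfolding optP_def by auto
  qed
  show ?thesis using A B by blast
qed

end
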